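(* Let $\mathcal I$ be an instance of the a priori TRP on a metric $(V,d)$ with root $r$, $n=|V|$, and probabilities $p_v\ge 1/n^2$ for all $v\in V$. Let $p=\frac1n\min_{v\in V}p_v$ and let $\mathcal J$ be the uniform instance obtained by replacing each $v\in V$ by a set $S_v$ of $t_v=\lceil p_v/p\rceil$ co-located copies of $v$ (distance $0$ within $S_v$, distance $d(u,v)$ between any copy of $u$ and any copy of $v$), each copy independently active with probability $p$. Let $\widehat\pi$ be any consecutive master tour on $\mathcal J$, i.e. one visiting all vertices of each $S_v$ consecutively, with expected latency $\mathrm{ALG}(\mathcal J)$, and let $\pi$ be the master tour on $V$ visiting the vertices $v$ in the order in which the groups $S_v$ are visited by $\widehat\pi$. Then the expected latency $\mathrm{ALG}(\mathcal I)$ of $\pi$ on $\mathcal I$ satisfies $$\mathrm{ALG}(\mathcal I)\le\left(\frac{e}{e-1}\right)^3\left(1+\frac1n\right)^3\mathrm{ALG}(\mathcal J).$$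
   Context: An instance of the a priori TRP consists of a finite metric $(V,d)$, a root $r$, and independent activation probabilities $p_v$. A master tour is a tour from $r$ visiting all vertices; for a random active set $A$ (each $v$ independently active with probability $p_v$), the tour is shortcut to $A$, the latency of $v\in A$ is its distance from $r$ along the shortcut tour, and the expected latency of the master tour is the expected sum of latencies of active vertices. *)

theory Defs
  imports Complex_Main
begin

fun pathlen :: "('b \<Rightarrow> 'b \<Rightarrow> real) \<Rightarrow> 'b \<Rightarrow> 'b list \<Rightarrow> real" where
  "pathlen d x [] = 0"
| "pathlen d x (y # ys) = d x y + pathlen d y ys"

definition total_latency :: "('b \<Rightarrow> 'b \<Rightarrow> real) \<Rightarrow> 'b \<Rightarrow> 'b list \<Rightarrow> 'b set \<Rightarrow> real" where
  "total_latency d r \<sigma> A =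
     (let w = filter (\<lambda>x. x \<in> A) \<sigma> in \<Sum>k<length w. pathlen d r (take (Suc k) w))"

definition expected_latency ::
  "('b \<Rightarrow> 'b \<Rightarrow> real) \<Rightarrow> 'b \<Rightarrow> ('b \<Rightarrow> real) \<Rightarrow> 'b set \<Rightarrow> 'b list \<Rightarrow> real" where
  "expected_latency d r q S \<sigma> =
     (\<Sum>A\<in>Pow S. (\<Prod>v\<in>A. q v) * (\<Prod>v\<in>S - A. 1 - q v) * total_latency d r \<sigma> A)"

definition master_tour :: "'b set \<Rightarrow> 'b list \<Rightarrow> bool" where
  "master_tour S \<sigma> \<longleftrightarrow> distinct \<sigma> \<and> set \<sigma> = S"

definition metric_on :: "'b set \<Rightarrow> ('b \<Rightarrow> 'b \<Rightarrow> real) \<Rightarrow> bool" where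
  "metric_on P d \<longleftrightarrow>
     (\<forall>x\<in>P. \<forall>y\<in>P. (d x y = 0 \<longleftrightarrow> x = y) \<and> d x y = d y x) \<and>
     (\<forall>x\<in>P. \<forall>y\<in>P. \<forall>z\<in>P. d x z \<le> d x y + d y z)"

end

theory Submission
  imports Defs "HOL-Analysis.Convex"
begin

fun Fl :: "('b \<Rightarrow> 'b \<Rightarrow> real) \<Rightarrow> 'b \<Rightarrow> ('b \<times> real) list \<Rightarrow> 'b \<Rightarrow> real" where
  "Fl d x [] v = d x v"
| "Fl d x ((a, qa) # ys) v = qa * (d x a + Fl d a ys v) + (1 - qa) * Fl d x ys v"

fun EE :: "('b \<Rightarrow> real) \<Rightarrow> 'b list \<Rightarrow> ('b set \<Rightarrow> real) \<Rightarrow> real" where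
  "EE q [] f = f {}"
| "EE q (a # as) f = q a * EE q as (\<lambda>A. f (insert a A)) + (1 - q a) * EE q as f"

lemma Ex_Pow:
  assumes "distinct \<sigma>"
  shows "(\<Sum>A\<in>Pow (set \<sigma>). (\<Prod>v\<in>A. q v) * (\<Prod>v\<in>set \<sigma> - A. 1 - q v) * f A) = EE q \<sigma> f"
  using assms
proof (induction \<sigma> arbitrary: f)
  case Nil
  then show ?case by simp
next
  case (Cons a \<sigma>)
  let ?S = "set \<sigma>"
  have an: "a \<notin> ?S" and d: "distinct \<sigma>" using Cons.prems by auto
  have fin: "finite ?S" by simp
  have disj: "Pow ?S \<inter> insert a ` Pow ?S = {}" using an by auto
  have inj: "inj_on (insert a) (Pow ?S)" using an by (auto simp: inj_on_def)
  have "(\<Sum>A\<in>Pow (set (a#\<sigma>)). (\<Prod>v\<in>A. q v) * (\<Prod>v\<in>set (a#\<sigma>) - A. 1 - q v) * f A)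
     = (\<Sum>A\<in>Pow ?S. (\<Prod>v\<in>A. q v) * (\<Prod>v\<in>insert a ?S - A. 1 - q v) * f A)
     + (\<Sum>A\<in>insert a ` Pow ?S. (\<Prod>v\<in>A. q v) * (\<Prod>v\<in>insert a ?S - A. 1 - q v) * f A)"
    by (simp add: Pow_insert sum.union_disjoint disj)
  also have "(\<Sum>A\<in>Pow ?S. (\<Prod>v\<in>A. q v) * (\<Prod>v\<in>insert a ?S - A. 1 - q v) * f A)
      = (1 - q a) * (\<Sum>A\<in>Pow ?S. (\<Prod>v\<in>A. q v) * (\<Prod>v\<in>?S - A. 1 - q v) * f A)"
    unfolding sum_distrib_left
  proof (rule sum.cong[OF refl])
    fix A assume "A \<in> Pow ?S"
    then have "insert a ?S - A = insert a (?S - A)" "a \<notin> ?S - A" using an by auto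
    then show "(\<Prod>v\<in>A. q v) * (\<Prod>v\<in>insert a ?S - A. 1 - q v) * f A = (1 - q a) * ((\<Prod>v\<in>A. q v) * (\<Prod>v\<in>?S - A. 1 - q v) * f A)"
      by simp
  qed
  also have "(\<Sum>A\<in>insert a ` Pow ?S. (\<Prod>v\<in>A. q v) * (\<Prod>v\<in>insert a ?S - A. 1 - q v) * f A)
      = q a * (\<Sum>A\<in>Pow ?S. (\<Prod>v\<in>A. q v) * (\<Prod>v\<in>?S - A. 1 - q v) * f (insert a A))"
    unfolding sum.reindex[OF inj] sum_distrib_left
  proof (rule sum.cong[OF refl])
    fix A assume A: "A \<in> Pow ?S"
    then have "insert a ?S - insert a A = ?S - A" "a \<notin> A" "finite A" using an fin finite_subset by auto
    then show "((\<lambda>A. (\<Prod>v\<in>A. q v) * (\<Prod>v\<in>insert a ?S - A. 1 - q v) * f A) \<circ> insert a) A = q a * ((\<Prod>v\<in>A. q v) * (\<Prod>v\<in>?S - A. 1 - q v) * f (insert a A))"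
      by simp
  qed
  also have "(\<Sum>A\<in>Pow ?S. (\<Prod>v\<in>A. q v) * (\<Prod>v\<in>?S - A. 1 - q v) * f A) = EE q \<sigma> f"
    by (rule Cons.IH[OF d])
  also have "(\<Sum>A\<in>Pow ?S. (\<Prod>v\<in>A. q v) * (\<Prod>v\<in>?S - A. 1 - q v) * f (insert a A)) = EE q \<sigma> (\<lambda>A. f (insert a A))"
    by (rule Cons.IH[OF d])
  finally show ?case by (simp add: algebra_simps)
qed

lemma Ex_cong: "(\<And>A. A \<subseteq> set \<sigma> \<Longrightarrow> f A = g A) \<Longrightarrow> EE q \<sigma> f = EE q \<sigma> g"
proof (induction \<sigma> arbitrary: f g)
  case Nil then show ?case by simp
next
  case (Cons a \<sigma>)
  have 1: "EE q \<sigma> (\<lambda>A. f (insert a A)) = EE q \<sigma> (\<lambda>A. g (insert a A))"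
    by (rule Cons.IH) (rule Cons.prems, auto)
  have 2: "EE q \<sigma> f = EE q \<sigma> g" by (rule Cons.IH) (use Cons.prems in auto)
  show ?case using 1 2 by simp
qed

lemma Ex_const: "EE q \<sigma> (\<lambda>A. c) = c"
  by (induction \<sigma>) (auto simp: algebra_simps)

lemma Ex_add: "EE q \<sigma> (\<lambda>A. f A + g A) = EE q \<sigma> f + EE q \<sigma> g"
  by (induction \<sigma> arbitrary: f g) (auto simp: algebra_simps)

lemma Ex_sum: "EE q \<sigma> (\<lambda>A. \<Sum>k<n. f k A) = (\<Sum>k<n. EE q \<sigma> (f k))"
proof (induction \<sigma> arbitrary: f)
  case Nil then show ?case by simp
next
  case (Cons a \<sigma>)
  show ?case
    using Cons.IH[of "\<lambda>k A. f k (insert a A)"] Cons.IH[of f]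
    by (simp add: sum.distrib sum_distrib_left)
qed

lemma Ex_ind:
  assumes "v \<in> set \<sigma>" "distinct \<sigma>"
  shows "EE q \<sigma> (\<lambda>A. if v \<in> A then c else 0) = q v * c"
  using assms
proof (induction \<sigma>)
  case Nil then show ?case by simp
next
  case (Cons a \<sigma>)
  show ?case
  proof (cases "a = v")
    case True
    then have "v \<notin> set \<sigma>" using Cons.prems by auto
    then have "EE q \<sigma> (\<lambda>A. if v \<in> A then c else 0) = EE q \<sigma> (\<lambda>A. 0)"
      by (intro Ex_cong) auto
    then show ?thesis using True by (simp add: Ex_const)
  next
    case False
    then have "v \<in> set \<sigma>" "distinct \<sigma>" using Cons.prems by auto
    then show ?thesis using Cons.IH False by (simp add: algebra_simps)
  qed
qed

lemma Ex_main:
  assumes "distinct (xs @ v # ys)"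
  shows "EE q (xs @ v # ys) (\<lambda>A. if v \<in> A then pathlen d x (filter (\<lambda>u. u \<in> A) xs @ [v]) else 0)
       = q v * Fl d x (map (\<lambda>u. (u, q u)) xs) v"
  using assms
proof (induction xs arbitrary: x)
  case Nil
  then have vn: "v \<notin> set ys" by auto
  have "EE q ys (\<lambda>A. if v \<in> A then pathlen d x (filter (\<lambda>u. u \<in> A) [] @ [v]) else 0) = EE q ys (\<lambda>A. 0)"
    by (intro Ex_cong) (use vn in auto)
  then show ?case by (simp add: Ex_const)
next
  case (Cons a xs)
  let ?\<sigma> = "xs @ v # ys"
  have dist: "distinct ?\<sigma>" and an: "a \<notin> set ?\<sigma>" using Cons.prems by auto
  have "EE q ?\<sigma> (\<lambda>A. if v \<in> insert a A then pathlen d x (filter (\<lambda>u. u \<in> insert a A) (a # xs) @ [v]) else 0)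
     = EE q ?\<sigma> (\<lambda>A. (if v \<in> A then d x a else 0) + (if v \<in> A then pathlen d a (filter (\<lambda>u. u \<in> A) xs @ [v]) else 0))"
  proof (rule Ex_cong)
    fix A assume "A \<subseteq> set ?\<sigma>"
    then have "a \<notin> A" "a \<noteq> v" using an by auto
    moreover have "filter (\<lambda>u. u \<in> insert a A) xs = filter (\<lambda>u. u \<in> A) xs"
      using an by (intro filter_cong) auto
    ultimately show "(if v \<in> insert a A then pathlen d x (filter (\<lambda>u. u \<in> insert a A) (a # xs) @ [v]) else 0)
       = (if v \<in> A then d x a else 0) + (if v \<in> A then pathlen d a (filter (\<lambda>u. u \<in> A) xs @ [v]) else 0)"
      by simp
  qed
  also have "\<dots> = EE q ?\<sigma> (\<lambda>A. if v \<in> A then d x a else 0) + EE q ?\<sigma> (\<lambda>A. if v \<in> A then pathlen d a (filter (\<lambda>u. u \<in> A) xs @ [v]) else 0)"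
    by (rule Ex_add)
  also have "\<dots> = q v * d x a + q v * Fl d a (map (\<lambda>u. (u, q u)) xs) v"
    using Ex_ind[of v ?\<sigma> q "d x a"] dist Cons.IH[OF dist] by simp
  finally have 1: "EE q ?\<sigma> (\<lambda>A. if v \<in> insert a A then pathlen d x (filter (\<lambda>u. u \<in> insert a A) (a # xs) @ [v]) else 0) = q v * d x a + q v * Fl d a (map (\<lambda>u. (u, q u)) xs) v" .
  have 2: "EE q ?\<sigma> (\<lambda>A. if v \<in> A then pathlen d x (filter (\<lambda>u. u \<in> A) (a # xs) @ [v]) else 0)
     = EE q ?\<sigma> (\<lambda>A. if v \<in> A then pathlen d x (filter (\<lambda>u. u \<in> A) xs @ [v]) else 0)"
    by (rule Ex_cong) (use an in auto)
  show ?case using 1 2 Cons.IH[OF dist] by (simp add: algebra_simps)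
qed

lemma TL_formula:
  "total_latency d r \<sigma> A = (\<Sum>k<length \<sigma>. if \<sigma>!k \<in> A then pathlen d r (filter (\<lambda>u. u \<in> A) (take k \<sigma>) @ [\<sigma>!k]) else 0)"
proof (induction \<sigma> rule: rev_induct)
  case Nil then show ?case by (simp add: total_latency_def Let_def)
next
  case (snoc a \<sigma>)
  let ?w = "filter (\<lambda>x. x \<in> A) \<sigma>"
  have R: "(\<Sum>k<length (\<sigma> @ [a]). if (\<sigma>@[a])!k \<in> A then pathlen d r (filter (\<lambda>u. u \<in> A) (take k (\<sigma>@[a])) @ [(\<sigma>@[a])!k]) else 0)
     = (\<Sum>k<length \<sigma>. if \<sigma>!k \<in> A then pathlen d r (filter (\<lambda>u. u \<in> A) (take k \<sigma>) @ [\<sigma>!k]) else 0)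
       + (if a \<in> A then pathlen d r (?w @ [a]) else 0)"
    by (simp add: nth_append, intro sum.cong, auto simp: nth_append)
  show ?case
  proof (cases "a \<in> A")
    case True
    have "total_latency d r (\<sigma> @ [a]) A = (\<Sum>k<Suc (length ?w). pathlen d r (take (Suc k) (?w @ [a])))"
      using True by (simp add: total_latency_def Let_def)
    also have "\<dots> = (\<Sum>k<length ?w. pathlen d r (take (Suc k) ?w)) + pathlen d r (?w @ [a])"
      by simp
    also have "(\<Sum>k<length ?w. pathlen d r (take (Suc k) ?w)) = total_latency d r \<sigma> A"
      by (simp add: total_latency_def Let_def)
    finally show ?thesis using R snoc True by simp
  next
    case False
    then show ?thesis using R snoc by (simp add: total_latency_def Let_def)
  qed
qed

lemma EL_formula:
  assumes "distinct \<sigma>"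
  shows "expected_latency d r q (set \<sigma>) \<sigma> = (\<Sum>k<length \<sigma>. q (\<sigma>!k) * Fl d r (map (\<lambda>u. (u, q u)) (take k \<sigma>)) (\<sigma>!k))"
proof -
  have "expected_latency d r q (set \<sigma>) \<sigma> = EE q \<sigma> (total_latency d r \<sigma>)"
    unfolding expected_latency_def using Ex_Pow[OF assms, of q] by simp
  also have "\<dots> = EE q \<sigma> (\<lambda>A. \<Sum>k<length \<sigma>. if \<sigma>!k \<in> A then pathlen d r (filter (\<lambda>u. u \<in> A) (take k \<sigma>) @ [\<sigma>!k]) else 0)"
    by (rule arg_cong[where f="EE q \<sigma>"]) (rule ext, rule TL_formula)
  also have "\<dots> = (\<Sum>k<length \<sigma>. EE q \<sigma> (\<lambda>A. if \<sigma>!k \<in> A then pathlen d r (filter (\<lambda>u. u \<in> A) (take k \<sigma>) @ [\<sigma>!k]) else 0))"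
    by (rule Ex_sum)
  also have "\<dots> = (\<Sum>k<length \<sigma>. q (\<sigma>!k) * Fl d r (map (\<lambda>u. (u, q u)) (take k \<sigma>)) (\<sigma>!k))"
  proof (rule sum.cong[OF refl])
    fix k assume "k \<in> {..<length \<sigma>}"
    then have k: "k < length \<sigma>" by simp
    have e: "\<sigma> = take k \<sigma> @ \<sigma>!k # drop (Suc k) \<sigma>" using id_take_nth_drop[OF k] .
    have "EE q \<sigma> (\<lambda>A. if \<sigma>!k \<in> A then pathlen d r (filter (\<lambda>u. u \<in> A) (take k \<sigma>) @ [\<sigma>!k]) else 0)
      = EE q (take k \<sigma> @ \<sigma>!k # drop (Suc k) \<sigma>) (\<lambda>A. if \<sigma>!k \<in> A then pathlen d r (filter (\<lambda>u. u \<in> A) (take k \<sigma>) @ [\<sigma>!k]) else 0)"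
      using e by metis
    also have "\<dots> = q (\<sigma>!k) * Fl d r (map (\<lambda>u. (u, q u)) (take k \<sigma>)) (\<sigma>!k)"
      by (rule Ex_main) (metis e assms)
    finally show "EE q \<sigma> (\<lambda>A. if \<sigma>!k \<in> A then pathlen d r (filter (\<lambda>u. u \<in> A) (take k \<sigma>) @ [\<sigma>!k]) else 0) = q (\<sigma>!k) * Fl d r (map (\<lambda>u. (u, q u)) (take k \<sigma>)) (\<sigma>!k)" .
  qed
  finally show ?thesis .
qed


lemma metric_facts:
  assumes "metric_on P d" "x \<in> P" "y \<in> P" "z \<in> P"
  shows "d x x = 0" "d x y = d y x" "d x z \<le> d x y + d y z" "d x y \<ge> 0"
proof -
  show 1: "d x x = 0" "d x y = d y x" "d x z \<le> d x y + d y z" using assms unfolding metric_on_def by blast+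
  have "d x x \<le> d x y + d y x" using assms unfolding metric_on_def by blast
  then show "d x y \<ge> 0" using 1 by simp
qed

lemma Fl_nonneg:
  assumes m: "metric_on P d" and "x \<in> P" "v \<in> P" "set xs \<subseteq> P" "\<forall>u\<in>set xs. 0 \<le> q u \<and> q u \<le> 1"
  shows "0 \<le> Fl d x (map (\<lambda>u. (u, q u)) xs) v"
  using assms(2-)
proof (induction xs arbitrary: x)
  case Nil then show ?case using metric_facts[OF m] by simp
next
  case (Cons a xs)
  have a: "a \<in> P" "0 \<le> q a" "q a \<le> 1" using Cons.prems by auto
  have "0 \<le> Fl d a (map (\<lambda>u. (u, q u)) xs) v" "0 \<le> Fl d x (map (\<lambda>u. (u, q u)) xs) v"
    using Cons.IH Cons.prems a by auto
  moreover have "0 \<le> d x a" using metric_facts(4)[OF m] Cons.prems a by blast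
  ultimately show ?case using a by simp
qed

lemma Fl_lip:
  assumes m: "metric_on P d" and "x \<in> P" "y \<in> P" "v \<in> P" "set xs \<subseteq> P" "\<forall>u\<in>set xs. 0 \<le> q u \<and> q u \<le> 1"
  shows "\<bar>Fl d x (map (\<lambda>u. (u, q u)) xs) v - Fl d y (map (\<lambda>u. (u, q u)) xs) v\<bar> \<le> d x y"
  using assms(2-)
proof (induction xs arbitrary: x y)
  case Nil
  have "d x v \<le> d x y + d y v" "d y v \<le> d y x + d x v" "d y x = d x y"
    using metric_facts[OF m] Nil.prems by blast+
  then show ?case by simp
next
  case (Cons a xs)
  have a: "a \<in> P" "0 \<le> q a" "q a \<le> 1" using Cons.prems by auto
  have IH: "\<bar>Fl d x (map (\<lambda>u. (u, q u)) xs) v - Fl d y (map (\<lambda>u. (u, q u)) xs) v\<bar> \<le> d x y"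
    using Cons.IH Cons.prems by auto
  have t: "d x a \<le> d x y + d y a" "d y a \<le> d y x + d x a" "d y x = d x y"
    using metric_facts[OF m] Cons.prems a by blast+
  have "\<bar>q a * (d x a - d y a)\<bar> \<le> q a * d x y"
    using t a by (simp add: abs_mult abs_le_iff mult_left_mono)
  moreover have "\<bar>(1 - q a) * (Fl d x (map (\<lambda>u. (u, q u)) xs) v - Fl d y (map (\<lambda>u. (u, q u)) xs) v)\<bar> \<le> (1 - q a) * d x y"
    using IH a by (simp add: abs_mult mult_left_mono)
  ultimately show ?case
    by (simp add: algebra_simps)
qed

lemma Fl_compare:
  assumes m: "metric_on P d" and c: "0 \<le> c" "c \<le> 1"
    and "x \<in> P" "v \<in> P" "set xs \<subseteq> P" "\<forall>u\<in>set xs. 0 \<le> q u \<and> q u \<le> 1"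
    and "\<forall>u\<in>set xs. 0 \<le> q' u \<and> q' u \<le> 1 \<and> c * q u \<le> q' u"
  shows "c^2 * Fl d x (map (\<lambda>u. (u, q u)) xs) v \<le> Fl d x (map (\<lambda>u. (u, q' u)) xs) v"
  using assms(4-)
proof (induction xs arbitrary: x)
  case Nil then show ?case using metric_facts(4)[OF m, of x v] c by (simp add: power_le_one mult_left_le_one_le)
next
  case (Cons a xs)
  have a: "a \<in> P" "0 \<le> q a" "q a \<le> 1" "0 \<le> q' a" "q' a \<le> 1" "c * q a \<le> q' a" using Cons.prems by auto
  define A where "A = Fl d a (map (\<lambda>u. (u, q u)) xs) v"
  define X where "X = Fl d x (map (\<lambda>u. (u, q u)) xs) v"
  define A' where "A' = Fl d a (map (\<lambda>u. (u, q' u)) xs) v"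
  define X' where "X' = Fl d x (map (\<lambda>u. (u, q' u)) xs) v"
  define D where "D = d x a"
  have IA: "c^2 * A \<le> A'" and IX: "c^2 * X \<le> X'" unfolding A_def A'_def X_def X'_def
    using Cons.IH Cons.prems a by auto
  have lip: "\<bar>A - X\<bar> \<le> D" unfolding A_def X_def D_def
    using Fl_lip[OF m, of a x v xs q] Cons.prems a metric_facts(2)[OF m, of a x] by auto
  have D0: "0 \<le> D" unfolding D_def using metric_facts(4)[OF m] a Cons.prems by auto
  have c2: "0 \<le> c^2" "c^2 \<le> 1" using c by (auto simp: power_le_one)
  have R: "q' a * (D + c^2 * A) + (1 - q' a) * (c^2 * X) \<le> q' a * (D + A') + (1 - q' a) * X'"
    using IA IX a by (intro add_mono mult_left_mono) auto
  have key: "c^2 * (q a * (D + A) + (1 - q a) * X) \<le> q' a * (D + c^2 * A) + (1 - q' a) * (c^2 * X)"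
  proof (cases "q a \<le> q' a")
    case True
    have "(q' a - q a) * (- D) \<le> (q' a - q a) * (A - X)"
      by (rule mult_left_mono) (use True lip in \<open>auto simp: abs_le_iff\<close>)
    then have "c^2 * ((q' a - q a) * (A - X)) \<ge> c^2 * (- ((q' a - q a) * D))"
      using c2 by (intro mult_left_mono) auto
    moreover have "q' a * D - c^2 * q a * D - c^2 * (q' a - q a) * D = q' a * (1 - c^2) * D"
      by (simp add: algebra_simps)
    moreover have "0 \<le> q' a * (1 - c^2) * D" using a c2 D0 by simp
    ultimately show ?thesis by (simp add: algebra_simps)
  next
    case False
    have "(q a - q' a) * (A - X) \<le> (q a - q' a) * D"
      using False lip by (intro mult_left_mono) (auto simp: abs_le_iff)
    then have "c^2 * ((q a - q' a) * (A - X)) \<le> c^2 * ((q a - q' a) * D)"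
      by (rule mult_left_mono) (use c2 in auto)
    moreover have "q' a * (1 + c^2) \<ge> c * q a * (1 + c^2)" using a c2 by (intro mult_right_mono) auto
    moreover have "c * q a * (1 + c^2) - 2 * c^2 * q a = q a * (c * (1 - c)^2)" by (simp add: algebra_simps power2_eq_square)
    moreover have "0 \<le> q a * (c * (1 - c)^2)" using a c by simp
    ultimately have "q' a * (1 + c^2) - 2 * c^2 * q a \<ge> 0" by linarith
    then have "0 \<le> (q' a * (1 + c^2) - 2 * c^2 * q a) * D" using D0 by simp
    with \<open>c^2 * ((q a - q' a) * (A - X)) \<le> c^2 * ((q a - q' a) * D)\<close> show ?thesis
      by (simp add: algebra_simps)
  qed
  show ?case using key R unfolding A_def X_def A'_def X'_def D_def by simp
qed

lemma Fl_group:
  assumes "d u u = 0"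
  shows "Fl d x (replicate k (u, p) @ ys) v = (1 - (1 - p)^k) * (d x u + Fl d u ys v) + (1 - p)^k * Fl d x ys v"
proof (induction k arbitrary: x)
  case 0 then show ?case by simp
next
  case (Suc k)
  have u: "Fl d u (replicate k (u, p) @ ys) v = Fl d u ys v"
    using Suc[of u] assms by (simp add: algebra_simps)
  have "Fl d x (replicate (Suc k) (u, p) @ ys) v = p * (d x u + Fl d u ys v) + (1 - p) * Fl d x (replicate k (u, p) @ ys) v"
    using u by simp
  also have "\<dots> = p * (d x u + Fl d u ys v) + (1 - p) * ((1 - (1 - p)^k) * (d x u + Fl d u ys v) + (1 - p)^k * Fl d x ys v)"
    by (simp only: Suc[of x])
  also have "\<dots> = (1 - (1 - p)^Suc k) * (d x u + Fl d u ys v) + (1 - p)^Suc k * Fl d x ys v"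
    by (simp add: algebra_simps)
  finally show ?case .
qed

lemma Fl_map:
  "Fl (\<lambda>x y. d (h x) (h y)) x (map (\<lambda>u. (u, c)) ys) v = Fl d (h x) (map (\<lambda>u. (u, c)) (map h ys)) (h v)"
  by (induction ys arbitrary: x) auto

lemma exp_ineq:
  fixes y :: real
  assumes "0 \<le> y" "y \<le> 1"
  shows "(1 - exp (-1)) * y \<le> 1 - exp (- y)"
proof -
  have "exp ((1 - y) *\<^sub>R (0::real) + y *\<^sub>R (-1::real)) \<le> (1 - y) * exp 0 + y * exp (-1)"
    using convex_onD[OF exp_convex] assms by blast
  then show ?thesis by (simp add: algebra_simps)
qed


lemma sum_split_nat: fixes a b :: nat shows "(\<Sum>k<a + b. f k) = (\<Sum>k<a. f k) + (\<Sum>k<b. (f (a + k) :: real))"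
  by (induction b) (simp_all add: add.assoc)

lemma sum_append_split:
  "(\<Sum>k<length (xs @ ys). g (take k (xs @ ys)) ((xs @ ys) ! k)) =
   (\<Sum>k<length xs. g (take k xs) (xs ! k)) + (\<Sum>k<length ys. (g (xs @ take k ys) (ys ! k) :: real))"
proof -
  have "(\<Sum>k<length (xs @ ys). g (take k (xs @ ys)) ((xs @ ys) ! k))
     = (\<Sum>k<length xs. g (take k (xs @ ys)) ((xs @ ys) ! k)) + (\<Sum>k<length ys. g (take (length xs + k) (xs @ ys)) ((xs @ ys) ! (length xs + k)))"
    by (simp add: sum_split_nat)
  also have "(\<Sum>k<length xs. g (take k (xs @ ys)) ((xs @ ys) ! k)) = (\<Sum>k<length xs. g (take k xs) (xs ! k))"
    by (rule sum.cong) (auto simp: nth_append)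
  also have "(\<Sum>k<length ys. g (take (length xs + k) (xs @ ys)) ((xs @ ys) ! (length xs + k))) = (\<Sum>k<length ys. g (xs @ take k ys) (ys ! k))"
    by (rule sum.cong) (auto simp: nth_append)
  finally show ?thesis .
qed

lemma length_concat_rep: "length (concat (map (\<lambda>v. replicate (t v) v) xs)) = (\<Sum>i<length xs. t (xs ! i))"
  by (induction xs) (simp_all add: sum.lessThan_Suc_shift del: sum.lessThan_Suc)

lemma group_sum:
  assumes "\<forall>u\<in>set \<pi>. d u u = 0"
  shows "(\<Sum>k<length (concat (map (\<lambda>v. replicate (t v) v) \<pi>)).
            Fl d x (map (\<lambda>u. (u, p)) (take k (concat (map (\<lambda>v. replicate (t v) v) \<pi>)))) (concat (map (\<lambda>v. replicate (t v) v) \<pi>) ! k))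
       = (\<Sum>i<length \<pi>. real (t (\<pi>!i)) * Fl d x (map (\<lambda>u. (u, 1 - (1 - p)^(t u))) (take i \<pi>)) (\<pi>!i))"
  using assms
proof (induction \<pi> arbitrary: x)
  case Nil then show ?case by simp
next
  case (Cons u \<pi>)
  let ?L = "concat (map (\<lambda>v. replicate (t v) v) \<pi>)"
  let ?R = "replicate (t u) u"
  let ?a = "1 - (1 - p)^(t u)"
  let ?b = "(1 - p)^(t u)"
  define S where "S y = (\<Sum>i<length \<pi>. real (t (\<pi>!i)) * Fl d y (map (\<lambda>u. (u, 1 - (1 - p)^(t u))) (take i \<pi>)) (\<pi>!i))" for y
  define T where "T y = (\<Sum>k<length ?L. Fl d y (map (\<lambda>u. (u, p)) (take k ?L)) (?L ! k))" for y
  have uu: "d u u = 0" using Cons.prems by simp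
  have IH: "T y = S y" for y unfolding S_def T_def using Cons.IH Cons.prems by simp
  have lenL: "real (length ?L) = (\<Sum>i<length \<pi>. real (t (\<pi>!i)))"
    by (simp add: length_concat_rep)
  have rep: "Fl d x (replicate k (u, p)) u = d x u" for k
    using Fl_group[where d=d and u=u and x=x and k=k and p=p and ys="[]" and v=u, OF uu] uu by (simp add: algebra_simps)
  have "(\<Sum>k<length (?R @ ?L). Fl d x (map (\<lambda>u. (u, p)) (take k (?R @ ?L))) ((?R @ ?L) ! k))
     = (\<Sum>k<length ?R. Fl d x (map (\<lambda>u. (u, p)) (take k ?R)) (?R ! k)) + (\<Sum>k<length ?L. Fl d x (map (\<lambda>u. (u, p)) (?R @ take k ?L)) (?L ! k))"
    by (rule sum_append_split)
  also have "(\<Sum>k<length ?R. Fl d x (map (\<lambda>u. (u, p)) (take k ?R)) (?R ! k)) = real (t u) * d x u"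
    using rep by simp
  also have "(\<Sum>k<length ?L. Fl d x (map (\<lambda>u. (u, p)) (?R @ take k ?L)) (?L ! k))
      = (\<Sum>k<length ?L. ?a * d x u + ?a * Fl d u (map (\<lambda>u. (u, p)) (take k ?L)) (?L ! k) + ?b * Fl d x (map (\<lambda>u. (u, p)) (take k ?L)) (?L ! k))"
    by (rule sum.cong[OF refl]) (simp add: Fl_group[where d=d and u=u, OF uu] map_replicate algebra_simps)
  also have "\<dots> = real (length ?L) * ?a * d x u + ?a * T u + ?b * T x"
    unfolding T_def by (simp add: sum.distrib sum_distrib_left)
  finally have LHS: "(\<Sum>k<length (?R @ ?L). Fl d x (map (\<lambda>u. (u, p)) (take k (?R @ ?L))) ((?R @ ?L) ! k))
     = real (t u) * d x u + (real (length ?L) * ?a * d x u + ?a * T u + ?b * T x)" .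
  have "(\<Sum>i<length (u # \<pi>). real (t ((u#\<pi>)!i)) * Fl d x (map (\<lambda>u. (u, 1 - (1 - p)^(t u))) (take i (u#\<pi>))) ((u#\<pi>)!i))
     = real (t u) * d x u + (\<Sum>i<length \<pi>. real (t (\<pi>!i)) * Fl d x ((u, ?a) # map (\<lambda>u. (u, 1 - (1 - p)^(t u))) (take i \<pi>)) (\<pi>!i))"
    by (simp add: sum.lessThan_Suc_shift del: sum.lessThan_Suc)
  also have "(\<Sum>i<length \<pi>. real (t (\<pi>!i)) * Fl d x ((u, ?a) # map (\<lambda>u. (u, 1 - (1 - p)^(t u))) (take i \<pi>)) (\<pi>!i))
     = (\<Sum>i<length \<pi>. real (t (\<pi>!i)) * (?a * d x u) + ?a * (real (t (\<pi>!i)) * Fl d u (map (\<lambda>u. (u, 1 - (1 - p)^(t u))) (take i \<pi>)) (\<pi>!i))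
          + ?b * (real (t (\<pi>!i)) * Fl d x (map (\<lambda>u. (u, 1 - (1 - p)^(t u))) (take i \<pi>)) (\<pi>!i)))"
    by (rule sum.cong[OF refl]) (simp add: algebra_simps)
  also have "\<dots> = (\<Sum>i<length \<pi>. real (t (\<pi>!i))) * (?a * d x u) + ?a * S u + ?b * S x"
    unfolding S_def by (simp add: sum.distrib sum_distrib_left sum_distrib_right)
  finally have RHS: "(\<Sum>i<length (u # \<pi>). real (t ((u#\<pi>)!i)) * Fl d x (map (\<lambda>u. (u, 1 - (1 - p)^(t u))) (take i (u#\<pi>))) ((u#\<pi>)!i))
     = real (t u) * d x u + ((\<Sum>i<length \<pi>. real (t (\<pi>!i))) * (?a * d x u) + ?a * S u + ?b * S x)" .
  have eq: "concat (map (\<lambda>v. replicate (t v) v) (u # \<pi>)) = ?R @ ?L" by simp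
  show ?case unfolding eq using LHS RHS IH lenL by (simp add: algebra_simps)
qed


theorem lemma5:
  fixes V :: "'a set" and r :: 'a and d :: "'a \<Rightarrow> 'a \<Rightarrow> real"
    and pv :: "'a \<Rightarrow> real"
    and \<pi> :: "'a list" and \<sigma>J :: "('a \<times> nat) list"
  assumes finV: "finite V" and neV: "V \<noteq> {}"
    and metric: "metric_on (insert r V) d"
    and prob: "\<And>v. v \<in> V \<Longrightarrow> pv v \<le> 1"
    and lower: "\<And>v. v \<in> V \<Longrightarrow> pv v \<ge> 1 / (real (card V))^2"
    and tour_pi: "master_tour V \<pi>"
    and tour_J: "master_tour {(v, i). v \<in> V \<and> i < nat \<lceil>pv v / (Min (pv ` V) / real (card V))\<rceil>} \<sigma>J"
    and consecutive: "map fst \<sigma>J =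
          concat (map (\<lambda>v. replicate (nat \<lceil>pv v / (Min (pv ` V) / real (card V))\<rceil>) v) \<pi>)"
  shows "expected_latency d r pv V \<pi>
    \<le> (exp 1 / (exp 1 - 1)) ^ 3 * (1 + 1 / real (card V)) ^ 3 *
       expected_latency (\<lambda>x y. d (fst x) (fst y)) (r, 0)
         (\<lambda>_. Min (pv ` V) / real (card V))
         {(v, i). v \<in> V \<and> i < nat \<lceil>pv v / (Min (pv ` V) / real (card V))\<rceil>} \<sigma>J"
proof -
  define n where "n = real (card V)"
  define m where "m = Min (pv ` V)"
  define p where "p = m / n"
  define t where "t = (\<lambda>v. nat \<lceil>pv v / p\<rceil>)"
  define W where "W = {(v, i). v \<in> V \<and> i < t v}"
  define Q where "Q = (\<lambda>v. 1 - (1 - p) ^ t v)"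
  define c :: real where "c = 1 - exp (-1)"
  define P where "P = insert r V"
  have n1: "n \<ge> 1" unfolding n_def using finV neV using card_gt_0_iff[of V] by linarith
  have mV: "m \<in> pv ` V" unfolding m_def using finV neV by simp
  have mle: "m \<le> pv v" if "v \<in> V" for v unfolding m_def using finV that by simp
  have m0: "m > 0"
  proof -
    obtain v where "v \<in> V" "m = pv v" using mV by auto
    moreover have "1 / n^2 > 0" using n1 by simp
    ultimately show ?thesis using lower[of v] unfolding n_def by linarith
  qed
  have m1: "m \<le> 1" using mV prob by auto
  have p0: "p > 0" and p1: "p \<le> 1" unfolding p_def using m0 m1 n1 by (auto simp: divide_le_eq)
  have pv0: "0 \<le> pv v" "pv v \<le> 1" if "v \<in> V" for v using mle[OF that] m0 prob[OF that] by auto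
  have pt: "pv v \<le> p * real (t v)" if "v \<in> V" for v
  proof -
    have "pv v / p \<le> real (t v)" unfolding t_def by linarith
    then show ?thesis using p0 by (simp add: divide_le_eq mult.commute)
  qed
  have Q01: "0 \<le> Q v" "Q v \<le> 1" for v unfolding Q_def using p0 p1 by (auto simp: power_le_one)
  have c0: "0 < c" "c \<le> 1" unfolding c_def by auto
  have Qc: "c * pv v \<le> Q v" if "v \<in> V" for v
  proof -
    have e1: "1 - p \<le> exp (-p)" using exp_ge_add_one_self[of "-p"] by simp
    have "(1 - p) ^ t v \<le> exp (-p) ^ t v"
      using p1 e1 by (intro power_mono) auto
    also have "\<dots> = exp (- (p * real (t v)))" by (simp add: exp_of_nat_mult[symmetric] algebra_simps)
    also have "\<dots> \<le> exp (- pv v)" using pt[OF that] by simp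
    finally have "1 - exp (- pv v) \<le> Q v" unfolding Q_def by simp
    moreover have "c * pv v \<le> 1 - exp (- pv v)" unfolding c_def using exp_ineq pv0[OF that] by blast
    ultimately show ?thesis by simp
  qed
  have dpi: "distinct \<pi>" and spi: "set \<pi> = V" using tour_pi unfolding master_tour_def by auto
  have dJ: "distinct \<sigma>J" and sJ: "set \<sigma>J = W" using tour_J unfolding master_tour_def W_def t_def p_def m_def n_def by auto
  have cons: "map fst \<sigma>J = concat (map (\<lambda>v. replicate (t v) v) \<pi>)"
    using consecutive unfolding t_def p_def m_def n_def .
  have duu: "\<forall>u\<in>set \<pi>. d u u = 0" using metric_facts(1)[OF metric] spi by auto
  define FP where "FP i = Fl d r (map (\<lambda>u. (u, pv u)) (take i \<pi>)) (\<pi>!i)" for i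
  define FQ where "FQ i = Fl d r (map (\<lambda>u. (u, Q u)) (take i \<pi>)) (\<pi>!i)" for i
  have I: "expected_latency d r pv V \<pi> = (\<Sum>i<length \<pi>. pv (\<pi>!i) * FP i)"
    unfolding FP_def using EL_formula[OF dpi, of d r pv] spi by simp
  have "expected_latency (\<lambda>x y. d (fst x) (fst y)) (r, 0) (\<lambda>_. p) W \<sigma>J
     = (\<Sum>k<length \<sigma>J. p * Fl (\<lambda>x y. d (fst x) (fst y)) (r, 0) (map (\<lambda>u. (u, p)) (take k \<sigma>J)) (\<sigma>J!k))"
    using EL_formula[OF dJ, of "\<lambda>x y. d (fst x) (fst y)" "(r, 0)" "\<lambda>_. p"] sJ by simp
  also have "\<dots> = p * (\<Sum>k<length (map fst \<sigma>J). Fl d r (map (\<lambda>u. (u, p)) (take k (map fst \<sigma>J))) ((map fst \<sigma>J)!k))"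
    unfolding sum_distrib_left length_map
  proof (rule sum.cong[OF refl])
    fix k assume "k \<in> {..<length \<sigma>J}"
    then have k: "k < length \<sigma>J" by simp
    have "Fl (\<lambda>x y. d (fst x) (fst y)) (r, 0) (map (\<lambda>u. (u, p)) (take k \<sigma>J)) (\<sigma>J!k)
        = Fl d (fst (r, 0::nat)) (map (\<lambda>u. (u, p)) (map fst (take k \<sigma>J))) (fst (\<sigma>J!k))"
      using Fl_map[where h=fst and d=d and x="(r,0)" and ys="take k \<sigma>J" and v="\<sigma>J!k" and c=p] by simp
    also have "\<dots> = Fl d r (map (\<lambda>u. (u, p)) (take k (map fst \<sigma>J))) ((map fst \<sigma>J)!k)"
      using k by (simp only: take_map nth_map fst_conv)
    finally show "p * Fl (\<lambda>x y. d (fst x) (fst y)) (r, 0) (map (\<lambda>u. (u, p)) (take k \<sigma>J)) (\<sigma>J!k)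
        = p * Fl d r (map (\<lambda>u. (u, p)) (take k (map fst \<sigma>J))) ((map fst \<sigma>J)!k)" by simp
  qed
  also have "\<dots> = p * (\<Sum>i<length \<pi>. real (t (\<pi>!i)) * Fl d r (map (\<lambda>u. (u, 1 - (1 - p)^(t u))) (take i \<pi>)) (\<pi>!i))"
    unfolding cons by (simp only: group_sum[where d=d and \<pi>=\<pi> and t=t and x=r and p=p, OF duu])
  also have "\<dots> = p * (\<Sum>i<length \<pi>. real (t (\<pi>!i)) * FQ i)"
    unfolding FQ_def Q_def by (rule refl)
  finally have J: "expected_latency (\<lambda>x y. d (fst x) (fst y)) (r, 0) (\<lambda>_. p) W \<sigma>J = (\<Sum>i<length \<pi>. p * real (t (\<pi>!i)) * FQ i)"
    by (simp only: sum_distrib_left mult.assoc)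
  have each: "c^2 * (pv (\<pi>!i) * FP i) \<le> p * real (t (\<pi>!i)) * FQ i" if "i < length \<pi>" for i
  proof -
    have vi: "\<pi>!i \<in> V" using nth_mem[OF that] spi by simp
    have tk: "set (take i \<pi>) \<subseteq> V" using set_take_subset[of i \<pi>] spi by simp
    have rP: "r \<in> P" and viP: "\<pi>!i \<in> P" and tkP: "set (take i \<pi>) \<subseteq> P" using vi tk unfolding P_def by auto
    have mP: "metric_on P d" using metric unfolding P_def .
    have h1: "\<forall>u\<in>set (take i \<pi>). 0 \<le> pv u \<and> pv u \<le> 1" using tk pv0 by (meson subsetD)
    have h2: "\<forall>u\<in>set (take i \<pi>). 0 \<le> Q u \<and> Q u \<le> 1 \<and> c * pv u \<le> Q u" using tk Q01 Qc by (meson subsetD)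
    have h3: "\<forall>u\<in>set (take i \<pi>). 0 \<le> Q u \<and> Q u \<le> 1" using Q01 by blast
    have c00: "0 \<le> c" using c0 by simp
    have cmp: "c^2 * FP i \<le> FQ i" unfolding FP_def FQ_def
      by (rule Fl_compare[OF mP c00 c0(2) rP viP tkP h1 h2])
    have FQ0: "0 \<le> FQ i" unfolding FQ_def by (rule Fl_nonneg[OF mP rP viP tkP h3])
    have "c^2 * (pv (\<pi>!i) * FP i) = pv (\<pi>!i) * (c^2 * FP i)" by simp
    also have "\<dots> \<le> pv (\<pi>!i) * FQ i" using cmp pv0[OF vi] by (intro mult_left_mono) auto
    also have "\<dots> \<le> p * real (t (\<pi>!i)) * FQ i" using pt[OF vi] FQ0 by (intro mult_right_mono) auto
    finally show ?thesis .
  qed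
  have main: "c^2 * expected_latency d r pv V \<pi> \<le> expected_latency (\<lambda>x y. d (fst x) (fst y)) (r, 0) (\<lambda>_. p) W \<sigma>J"
    unfolding I J sum_distrib_left by (rule sum_mono) (use each in auto)
  have J0: "0 \<le> expected_latency (\<lambda>x y. d (fst x) (fst y)) (r, 0) (\<lambda>_. p) W \<sigma>J"
    unfolding J
  proof (rule sum_nonneg)
    fix i assume "i \<in> {..<length \<pi>}"
    then have vi: "\<pi>!i \<in> V" using spi by auto
    have tk: "set (take i \<pi>) \<subseteq> V" using set_take_subset[of i \<pi>] spi by simp
    have mP: "metric_on P d" using metric unfolding P_def .
    have rP: "r \<in> P" and viP: "\<pi>!i \<in> P" and tkP: "set (take i \<pi>) \<subseteq> P" using vi tk unfolding P_def by auto
    have h3: "\<forall>u\<in>set (take i \<pi>). 0 \<le> Q u \<and> Q u \<le> 1" using Q01 by blast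
    have FQ0: "0 \<le> FQ i" unfolding FQ_def by (rule Fl_nonneg[OF mP rP viP tkP h3])
    then show "0 \<le> p * real (t (\<pi>!i)) * FQ i" using p0 by simp
  qed
  have ec: "exp 1 / (exp 1 - 1) = 1 / c"
  proof -
    have "exp (1::real) > 1" by simp
    then show ?thesis unfolding c_def by (simp add: exp_minus field_simps)
  qed
  have ic1: "1 \<le> 1 / c" using c0 by simp
  have n1': "1 \<le> (1 + 1 / n) ^ 3" using n1 by simp
  have fac: "(1 / c)^2 \<le> (1 / c)^3 * (1 + 1 / n) ^ 3"
  proof -
    have "(1 / c)^2 \<le> (1/c)^3" using ic1 by (intro power_increasing) auto
    also have "\<dots> \<le> (1 / c)^3 * (1 + 1 / n) ^ 3" using mult_left_mono[OF n1', of "(1/c)^3"] c0 by simp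
    finally show ?thesis .
  qed
  let ?EJ = "expected_latency (\<lambda>x y. d (fst x) (fst y)) (r, 0) (\<lambda>_. p) W \<sigma>J"
  have "expected_latency d r pv V \<pi> = (1 / c)^2 * (c^2 * expected_latency d r pv V \<pi>)"
    using c0 by (simp add: power_one_over)
  also have "\<dots> \<le> (1 / c)^2 * ?EJ"
    using main by (intro mult_left_mono) auto
  also have "\<dots> \<le> (1 / c)^3 * (1 + 1 / n) ^ 3 * ?EJ"
    using fac J0 by (intro mult_right_mono) auto
  finally have fin: "expected_latency d r pv V \<pi> \<le> (exp 1 / (exp 1 - 1)) ^ 3 * (1 + 1 / n) ^ 3 * ?EJ"
    unfolding ec .
  show ?thesis using fin unfolding W_def t_def p_def m_def n_def .
qed

end
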